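(* Let $G=(V,E)$ be a connected graph, let $(C,+)$ be an Abelian group, let $c\colon V\to C$ be a distinguishing vertex colouring, and let $c'$ be the canonical edge colouring $c'(uv)=c(u)+c(v)$. Let $\Gamma=\{\gamma\in\operatorname{Aut} G : c'\circ\gamma=c'\}$ be the stabiliser of $c'$. Then $|\Gamma|\le |C|$.
   Context: Graphs are simple and may be infinite. Automorphisms act on edges by $\gamma(uv)=\gamma(u)\gamma(v)$. A vertex colouring $c$ is distinguishing if the identity is the only automorphism $\gamma$ with $c\circ\gamma=c$. *)

theory Defs
  imports Main
begin

text \<open>Simple graphs on the vertex type 'v (vertex set = UNIV, possibly infinite),
  given by an adjacency relation E.\<close>

definition simple_graph :: "('v \<Rightarrow> 'v \<Rightarrow> bool) \<Rightarrow> bool" where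
  "simple_graph E \<longleftrightarrow> (\<forall>u v. E u v \<longrightarrow> E v u) \<and> (\<forall>v. \<not> E v v)"

definition connected_graph :: "('v \<Rightarrow> 'v \<Rightarrow> bool) \<Rightarrow> bool" where
  "connected_graph E \<longleftrightarrow> (\<forall>u v. E\<^sup>*\<^sup>* u v)"

definition Aut :: "('v \<Rightarrow> 'v \<Rightarrow> bool) \<Rightarrow> ('v \<Rightarrow> 'v) set" where
  "Aut E = {\<gamma>. bij \<gamma> \<and> (\<forall>u v. E u v \<longleftrightarrow> E (\<gamma> u) (\<gamma> v))}"

definition distinguishing :: "('v \<Rightarrow> 'v \<Rightarrow> bool) \<Rightarrow> ('v \<Rightarrow> 'c) \<Rightarrow> bool" where
  "distinguishing E c \<longleftrightarrow> (\<forall>\<gamma>\<in>Aut E. c \<circ> \<gamma> = c \<longrightarrow> \<gamma> = id)"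

definition canonical_edge_colouring :: "('v \<Rightarrow> 'c::ab_group_add) \<Rightarrow> 'v \<Rightarrow> 'v \<Rightarrow> 'c" where
  "canonical_edge_colouring c u v = c u + c v"

definition edge_colouring_stabiliser ::
  "('v \<Rightarrow> 'v \<Rightarrow> bool) \<Rightarrow> ('v \<Rightarrow> 'v \<Rightarrow> 'c) \<Rightarrow> ('v \<Rightarrow> 'v) set" where
  "edge_colouring_stabiliser E c' =
     {\<gamma>\<in>Aut E. \<forall>u v. E u v \<longrightarrow> c' (\<gamma> u) (\<gamma> v) = c' u v}"

end

theory Submission
  imports Defs
begin

theorem mainTheorem5:
  fixes E :: "'v \<Rightarrow> 'v \<Rightarrow> bool" and c :: "'v \<Rightarrow> 'c::ab_group_add"
  assumes "simple_graph E"
    and "connected_graph E"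
    and "distinguishing E c"
  shows "(card_of (edge_colouring_stabiliser E (canonical_edge_colouring c)),
           card_of (UNIV :: 'c set)) \<in> ordLeq"
proof -
  let ?S = "edge_colouring_stabiliser E (canonical_edge_colouring c)"
  obtain v0 :: 'v where True by simp
  have inj: "inj_on (\<lambda>g. c (g v0)) ?S"
  proof (rule inj_onI)
    fix g d assume g: "g \<in> ?S" and d: "d \<in> ?S" and eq: "c (g v0) = c (d v0)"
    have gA: "g \<in> Aut E" and dA: "d \<in> Aut E" using g d
      by (auto simp: edge_colouring_stabiliser_def)
    have ge: "\<And>u w. E u w \<Longrightarrow> c (g u) + c (g w) = c u + c w" using g
      by (auto simp: edge_colouring_stabiliser_def canonical_edge_colouring_def)
    have de: "\<And>u w. E u w \<Longrightarrow> c (d u) + c (d w) = c u + c w" using d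
      by (auto simp: edge_colouring_stabiliser_def canonical_edge_colouring_def)
    have all: "c (g u) = c (d u)" for u
    proof -
      have "E\<^sup>*\<^sup>* v0 u" using assms(2) by (auto simp: connected_graph_def)
      then show ?thesis
      proof (induction rule: rtranclp_induct)
        case base then show ?case using eq .
      next
        case (step u w)
        have "c (g u) + c (g w) = c (d u) + c (d w)" using ge[OF step(2)] de[OF step(2)] by simp
        then show ?case using step(3) by simp
      qed
    qed
    have bd: "bij d" and bg: "bij g" using gA dA by (auto simp: Aut_def)
    have dE: "\<And>u v. E u v \<longleftrightarrow> E (d u) (d v)" and gE: "\<And>u v. E u v \<longleftrightarrow> E (g u) (g v)"
      using gA dA by (auto simp: Aut_def)
    let ?p = "g \<circ> inv d"
    have dinv: "d (inv d x) = x" for x using bd by (simp add: bij_is_surj surj_f_inv_f)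
    have pA: "?p \<in> Aut E"
    proof -
      have "bij ?p" using bg bd by (simp add: bij_comp bij_imp_bij_inv)
      moreover have "E u v \<longleftrightarrow> E (?p u) (?p v)" for u v
        using dE[of "inv d u" "inv d v"] gE[of "inv d u" "inv d v"] dinv by simp
      ultimately show ?thesis by (simp add: Aut_def)
    qed
    have "c \<circ> ?p = c"
    proof
      fix x show "(c \<circ> ?p) x = c x" using all[of "inv d x"] dinv[of x] by simp
    qed
    then have pid: "?p = id" using assms(3) pA by (auto simp: distinguishing_def)
    show "g = d"
    proof
      fix y
      have "?p (d y) = d y" using pid by simp
      moreover have "inv d (d y) = y" using bd by (simp add: bij_is_inj)
      ultimately show "g y = d y" by simp
    qed
  qed
  show ?thesis
    using card_of_ordLeq[of ?S "UNIV :: 'c set"] inj by blast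
qed

end
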